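(* Let $\omega$ be a radial weight and $0<p<\infty$ with $p\neq2$. Then $\mathrm{HL}^\omega_p\neq A^p_\omega$; more precisely, there is no constant $C>1$ such that $C^{-1}\|f\|_{\mathrm{HL}^\omega_p}\le\|f\|_{A^p_\omega}\le C\|f\|_{\mathrm{HL}^\omega_p}$ for all $f\in\mathcal H(\mathbb D)$.
   Context: $\mathbb{D}$ is the open unit disc, $\mathcal{H}(\mathbb{D})$ the analytic functions on it, $dA(z)=\frac{dx\,dy}{\pi}$. A radial weight is a non-negative $\omega\in L^1([0,1))$ extended by $\omega(z)=\omega(|z|)$, with $\int_r^1\omega(s)\,ds>0$ for all $0\le r<1$. Moments: $\omega_x=\int_0^1 r^x\omega(r)\,dr$. $\|f\|^p_{A^p_\omega}=\int_{\mathbb D}|f|^p\omega\,dA$. $\|f\|^p_{\mathrm{HL}^\omega_p}=\sum_{n=0}^\infty|\widehat f(n)|^p(n+1)^{p-2}\omega_{np+1}$ for $f(z)=\sum\widehat f(n)z^n$. *)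

theory Defs
  imports "HOL-Complex_Analysis.Complex_Analysis"
begin

text \<open>Radial weight: non-negative, integrable on [0,1), with positive tail integrals.
  It is extended to the disc by omega(z) = omega(|z|).\<close>
definition radial_weight :: "(real \<Rightarrow> real) \<Rightarrow> bool" where
  "radial_weight \<omega> \<longleftrightarrow>
     (\<forall>r\<in>{0..<1}. 0 \<le> \<omega> r) \<and>
     set_integrable lborel {0..<1::real} \<omega> \<and>
     (\<forall>r\<in>{0..<1::real}. (LINT s:{r..<1}|lborel. \<omega> s) > 0)"

definition moment :: "(real \<Rightarrow> real) \<Rightarrow> real \<Rightarrow> real" where
  "moment \<omega> x = (LINT r:{0..<1}|lborel. r powr x * \<omega> r)"

definition taylor_coeff :: "(complex \<Rightarrow> complex) \<Rightarrow> nat \<Rightarrow> complex" where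
  "taylor_coeff f n = (deriv ^^ n) f 0 / of_nat (fact n)"

definition ennroot :: "real \<Rightarrow> ennreal \<Rightarrow> ennreal" where
  "ennroot p x = (if x = \<infinity> then \<infinity> else ennreal (enn2real x powr (1 / p)))"

text \<open>Bergman norm: (integral over the disc of |f|^p omega dA)^(1/p), dA = dx dy / pi.\<close>
definition A_norm :: "(real \<Rightarrow> real) \<Rightarrow> real \<Rightarrow> (complex \<Rightarrow> complex) \<Rightarrow> ennreal" where
  "A_norm \<omega> p f = ennroot p
     ((\<integral>\<^sup>+ z. indicator (ball 0 1) z * ennreal (norm (f z) powr p * \<omega> (norm z)) \<partial>lborel)
        / ennreal pi)"

definition HL_norm :: "(real \<Rightarrow> real) \<Rightarrow> real \<Rightarrow> (complex \<Rightarrow> complex) \<Rightarrow> ennreal" where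
  "HL_norm \<omega> p f = ennroot p
     (\<Sum>n. ennreal (norm (taylor_coeff f n) powr p * (real n + 1) powr (p - 2)
                     * moment \<omega> (real n * p + 1)))"

end

theory Submission
  imports Defs
begin

lemma ball_meas: "emeasure lborel (ball (0::complex) r) = ennreal (pi * r^2)" if "r \<ge> 0"
  using emeasure_ball[OF that, of "0::complex"] by (simp add: unit_ball_vol_2 mult.commute)

lemma cball_meas: "emeasure lborel (cball (0::complex) r) = ennreal (pi * r^2)" if "r \<ge> 0"
  using emeasure_cball[OF that, of "0::complex"] by (simp add: unit_ball_vol_2 mult.commute)

lemma FTC_disc: "(\<integral>\<^sup>+r. ennreal (2*pi*r) * indicator {a..1} r \<partial>lborel) = ennreal (pi - pi*a^2)"
  if "0 \<le> a" "a \<le> 1" for a :: real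
proof -
  have "(\<integral>\<^sup>+r. ennreal (2*pi*r) * indicator {a..1} r \<partial>lborel) = ennreal (pi*1^2 - pi*a^2)"
    by (rule nn_integral_FTC_Icc[where F="\<lambda>r. pi*r^2"]) 
     (use that in \<open>auto intro!: derivative_eq_intros\<close>)
  then show ?thesis by simp
qed

lemma radial_measure:
  "distr (density lborel (indicator (ball (0::complex) 1))) borel norm
    = density lborel (\<lambda>r::real. ennreal (2*pi*r) * indicator {0..1} r)"
proof (rule measure_eqI_lessThan)
  fix x :: real
  have L: "emeasure (distr (density lborel (indicator (ball (0::complex) 1))) borel norm) {x<..}
        = emeasure lborel (ball 0 1 \<inter> {z::complex. x < norm z})"
    apply (subst emeasure_distr)
      apply simp_all
    apply (subst emeasure_density)
      apply (auto intro!: borel_measurable_indicator)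
     apply (subgoal_tac "norm -` {x<..} = {z::complex. x < norm z}")
      apply (simp add: borel_open open_Collect_less continuous_intros)
     apply auto[1]
    apply (subst nn_integral_indicator[symmetric])
     apply simp
    apply (rule nn_integral_cong)
    apply (auto split: split_indicator)
    done
  have R: "emeasure (density lborel (\<lambda>r::real. ennreal (2*pi*r) * indicator {0..1} r)) {x<..}
     = (\<integral>\<^sup>+r. ennreal (2*pi*r) * indicator ({0..1} \<inter> {x<..}) r \<partial>lborel)"
    apply (subst emeasure_density)
      apply simp_all
    apply (rule nn_integral_cong)
    apply (auto split: split_indicator)
    done
  have "emeasure lborel (ball 0 1 \<inter> {z::complex. x < norm z})
     = (\<integral>\<^sup>+r. ennreal (2*pi*r) * indicator ({0..1} \<inter> {x<..}) r \<partial>lborel)"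
  proof (cases "x < 0")
    case True
    then have "ball 0 1 \<inter> {z::complex. x < norm z} = ball 0 1" by (auto simp: order.strict_trans2)
    moreover have "{0..1} \<inter> {x<..} = {0..(1::real)}" using True by auto
    ultimately show ?thesis using FTC_disc[of 0] by (simp add: ball_meas)
  next
    case False
    show ?thesis
    proof (cases "x < 1")
      case True
      have "ball 0 1 \<inter> {z::complex. x < norm z} = ball 0 1 - cball 0 x" by auto
      then have "emeasure lborel (ball 0 1 \<inter> {z::complex. x < norm z}) = ennreal (pi * 1^2) - ennreal (pi*x^2)"
        using False True by (simp add: emeasure_Diff ball_meas cball_meas subset_ball cball_subset_ball_iff)
      also have "\<dots> = ennreal (pi - pi*x^2)"
        using False True by (subst ennreal_minus) (auto intro!: mult_left_mono simp: power_le_one)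
      also have "\<dots> = (\<integral>\<^sup>+r. ennreal (2*pi*r) * indicator {x..1} r \<partial>lborel)"
        using FTC_disc[of x] False True by simp
      also have "\<dots> = (\<integral>\<^sup>+r. ennreal (2*pi*r) * indicator ({0..1} \<inter> {x<..}) r \<partial>lborel)"
        apply (rule nn_integral_cong_AE)
        using AE_lborel_singleton[of x] apply eventually_elim
        using False by (auto split: split_indicator)
      finally show ?thesis .
    next
      case False2: False
      then have "ball 0 1 \<inter> {z::complex. x < norm z} = {}" by auto
      moreover have "{0..1} \<inter> {x<..} = ({}::real set)" using False2 by auto
      ultimately show ?thesis by simp
    qed
  qed
  then show "emeasure (distr (density lborel (indicator (ball (0::complex) 1))) borel norm) {x<..}
     = emeasure (density lborel (\<lambda>r::real. ennreal (2*pi*r) * indicator {0..1} r)) {x<..}"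
    using L R by simp
  show "emeasure (distr (density lborel (indicator (ball (0::complex) 1))) borel norm) {x<..} < \<infinity>"
  proof -
    have "emeasure lborel (ball 0 1 \<inter> {z::complex. x < norm z}) \<le> emeasure lborel (ball (0::complex) 1)"
      by (rule emeasure_mono) auto
    also have "\<dots> < \<infinity>" by (simp add: ball_meas)
    finally show ?thesis using L by simp
  qed
qed simp_all

lemma radial_integral:
  fixes g :: "real \<Rightarrow> ennreal"
  assumes g[measurable]: "g \<in> borel_measurable borel"
  shows "(\<integral>\<^sup>+z. indicator (ball (0::complex) 1) z * g (norm z) \<partial>lborel)
       = (\<integral>\<^sup>+r. ennreal (2*pi*r) * indicator {0..1} r * g r \<partial>lborel)"
proof -
  have "(\<integral>\<^sup>+z. indicator (ball (0::complex) 1) z * g (norm z) \<partial>lborel)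
      = (\<integral>\<^sup>+z. g (norm z) \<partial>density lborel (indicator (ball (0::complex) 1)))"
    by (subst nn_integral_density) (auto intro!: borel_measurable_indicator)
  also have "\<dots> = (\<integral>\<^sup>+r. g r \<partial>distr (density lborel (indicator (ball (0::complex) 1))) borel norm)"
    by (subst nn_integral_distr) auto
  also have "\<dots> = (\<integral>\<^sup>+r. g r \<partial>density lborel (\<lambda>r::real. ennreal (2*pi*r) * indicator {0..1} r))"
    by (simp add: radial_measure)
  also have "\<dots> = (\<integral>\<^sup>+r. ennreal (2*pi*r) * indicator {0..1} r * g r \<partial>lborel)"
    by (subst nn_integral_density) auto
  finally show ?thesis .
qed

lemma tc_power: "taylor_coeff (\<lambda>z. z^m) k = (if k = m then 1 else 0)"
proof -
  have e: "(\<lambda>w::complex. (w - 0)^m) = (\<lambda>z. z^m)" by simp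
  have "(deriv ^^ k) (\<lambda>z::complex. z^m) 0 = pochhammer (of_nat (Suc m - k)) k * 0 ^ (m - k)"
    using higher_deriv_power[of k 0 m 0] unfolding e by simp
  moreover have "pochhammer (of_nat (Suc m - k)) k * (0::complex) ^ (m - k) = (if k = m then fact m else 0)"
  proof (cases "k < m")
    case True then show ?thesis by simp
  next
    case False
    show ?thesis
    proof (cases "k = m")
      case True then show ?thesis by (simp add: pochhammer_fact)
    next
      case False2: False
      with False have "Suc m - k = 0" "k \<noteq> 0" by auto
      then show ?thesis using False2 by (simp add: pochhammer_0_left)
    qed
  qed
  ultimately show ?thesis unfolding taylor_coeff_def by simp
qed



context
  fixes \<omega> :: "real \<Rightarrow> real"
  assumes rw: "radial_weight \<omega>"
begin

lemma om_nonneg: "r \<in> {0..<1} \<Longrightarrow> 0 \<le> \<omega> r"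
  using rw unfolding radial_weight_def by auto

lemma om_int: "integrable lborel (\<lambda>r. indicator {0..<1} r *\<^sub>R \<omega> r)"
  using rw unfolding radial_weight_def set_integrable_def by auto

lemma om_meas[measurable]: "(\<lambda>r. indicator {0..<1} r * \<omega> r) \<in> borel_measurable borel"
  using borel_measurable_integrable[OF om_int] by simp

definition h :: "real \<Rightarrow> real \<Rightarrow> real" where
  "h x r = indicator {0..<1} r * (r powr x * \<omega> r)"

lemma h_eq: "h x r = r powr x * (indicator {0..<1} r * \<omega> r)"
  unfolding h_def by (simp add: ac_simps)

lemma h_meas[measurable]: "h x \<in> borel_measurable borel"
  unfolding h_eq[abs_def] by measurable

lemma h_nonneg: "x \<ge> 0 \<Longrightarrow> 0 \<le> h x r"
  unfolding h_def using om_nonneg by (auto split: split_indicator)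

lemma h_int: "x \<ge> 0 \<Longrightarrow> integrable lborel (h x)"
proof (rule Bochner_Integration.integrable_bound[OF om_int])
  assume x: "x \<ge> 0"
  show "h x \<in> borel_measurable lborel" by simp
  show "AE r in lborel. norm (h x r) \<le> norm (indicator {0..<1} r *\<^sub>R \<omega> r)"
  proof (rule AE_I2)
    fix r
    show "norm (h x r) \<le> norm (indicator {0..<1} r *\<^sub>R \<omega> r)"
    proof (cases "r \<in> {0..<1}")
      case True
      then have "r powr x \<le> 1" "0 \<le> r powr x" using x by (auto intro: powr_le1)
      then show ?thesis using True om_nonneg[OF True] unfolding h_def
        by (simp add: abs_mult mult_left_le_one_le)
    qed (simp add: h_def)
  qed
qed

lemma moment_h: "moment \<omega> x = integral\<^sup>L lborel (h x)"
  unfolding moment_def set_lebesgue_integral_def h_def by simp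

lemma moment_pos: "x \<ge> 0 \<Longrightarrow> 0 < moment \<omega> x"
proof (rule ccontr)
  assume x: "x \<ge> 0" and "\<not> 0 < moment \<omega> x"
  moreover have "0 \<le> moment \<omega> x" unfolding moment_h
    using h_nonneg[OF x] by (simp add: integral_nonneg_AE)
  ultimately have "integral\<^sup>L lborel (h x) = 0" unfolding moment_h by simp
  then have "AE r in lborel. h x r = 0"
    using integral_nonneg_eq_0_iff_AE[OF h_int[OF x]] h_nonneg[OF x] by simp
  then have "AE r in lborel. indicator {0..<1} r *\<^sub>R \<omega> r = 0"
    using AE_lborel_singleton[of 0]
  proof eventually_elim
    case (elim r)
    then show ?case unfolding h_def by (auto split: split_indicator)
  qed
  then have "(LINT s:{0..<1}|lborel. \<omega> s) = 0"
    unfolding set_lebesgue_integral_def by (rule integral_eq_zero_AE)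
  moreover have "(LINT s:{0..<1::real}|lborel. \<omega> s) > 0"
    using rw unfolding radial_weight_def by auto
  ultimately show False by simp
qed

end


context
  fixes \<omega> :: "real \<Rightarrow> real"
  assumes rw: "radial_weight \<omega>"
begin

lemma pt: "r \<noteq> 1 \<Longrightarrow> 0 \<le> p \<Longrightarrow>
   ennreal (2*pi*r) * indicator {0..1} r * ennreal ((r^n) powr p * (indicator {0..<1} r * \<omega> r))
   = ennreal (2*pi * h \<omega> (real n * p + 1) r)"
proof (cases "r \<in> {0..<1}")
  case True
  assume "r \<noteq> 1" "0 \<le> p"
  have w: "0 \<le> \<omega> r" using om_nonneg[OF rw True] .
  have k: "r * (r^n) powr p = r powr (real n * p + 1)"
  proof (cases "r = 0")
    case False
    then have "r > 0" using True by auto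
    then show ?thesis by (simp add: powr_add powr_realpow[symmetric] powr_powr)
  qed simp
  have "ennreal (2*pi*r) * indicator {0..1} r * ennreal ((r^n) powr p * (indicator {0..<1} r * \<omega> r))
     = ennreal (2*pi*r * ((r^n) powr p * \<omega> r))"
    using True w by (simp add: ennreal_mult[symmetric])
  also have "2*pi*r * ((r^n) powr p * \<omega> r) = 2*pi * h \<omega> (real n * p + 1) r"
    unfolding h_def[OF rw] using True k by (simp add: ac_simps)
  finally show ?thesis .
next
  case False
  assume "r \<noteq> 1"
  then show ?thesis using False unfolding h_def[OF rw] by (auto split: split_indicator)
qed

lemma A_mono:
  assumes p: "0 < p"
  shows "A_norm \<omega> p (\<lambda>z. z^n) = ennreal ((2 * moment \<omega> (real n * p + 1)) powr (1/p))"
proof -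
  define x where "x = real n * p + 1"
  have x0: "x \<ge> 0" unfolding x_def using p by simp
  define g where "g = (\<lambda>r::real. ennreal ((r^n) powr p * (indicator {0..<1} r * \<omega> r)))"
  have gm[measurable]: "g \<in> borel_measurable borel" unfolding g_def using om_meas[OF rw] by measurable
  have "(\<integral>\<^sup>+ z. indicator (ball 0 1) z * ennreal (norm ((z::complex)^n) powr p * \<omega> (norm z)) \<partial>lborel)
     = (\<integral>\<^sup>+z. indicator (ball (0::complex) 1) z * g (norm z) \<partial>lborel)"
    by (rule nn_integral_cong) (auto simp: g_def norm_power split: split_indicator)
  also have "\<dots> = (\<integral>\<^sup>+r. ennreal (2*pi*r) * indicator {0..1} r * g r \<partial>lborel)"
    by (rule radial_integral[OF gm])
  also have "\<dots> = (\<integral>\<^sup>+r. ennreal (2*pi * h \<omega> x r) \<partial>lborel)"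
    apply (rule nn_integral_cong_AE)
    using AE_lborel_singleton[of 1] apply eventually_elim
    unfolding g_def x_def using pt p by simp
  also have "\<dots> = ennreal (integral\<^sup>L lborel (\<lambda>r. 2*pi * h \<omega> x r))"
    apply (rule nn_integral_eq_integral)
    using h_int[OF rw x0] h_nonneg[OF rw x0] by auto
  also have "\<dots> = ennreal (2*pi * moment \<omega> x)"
    by (simp add: moment_h[OF rw])
  finally have I: "(\<integral>\<^sup>+ z. indicator (ball 0 1) z * ennreal (norm ((z::complex)^n) powr p * \<omega> (norm z)) \<partial>lborel)
     = ennreal (2*pi * moment \<omega> x)" .
  have m0: "0 \<le> moment \<omega> x" using moment_pos[OF rw x0] by simp
  have "ennreal (2*pi * moment \<omega> x) / ennreal pi = ennreal (2 * moment \<omega> x)"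
    using m0 by (subst divide_ennreal) auto
  then show ?thesis unfolding A_norm_def I ennroot_def x_def[symmetric] using m0 by simp
qed

lemma HL_mono:
  assumes p: "0 < p"
  shows "HL_norm \<omega> p (\<lambda>z. z^n) = ennreal (((real n + 1) powr (p - 2) * moment \<omega> (real n * p + 1)) powr (1/p))"
proof -
  define x where "x = real n * p + 1"
  have x0: "x \<ge> 0" unfolding x_def using p by simp
  have m0: "0 \<le> moment \<omega> x" using moment_pos[OF rw x0] by simp
  have "(\<Sum>k. ennreal (norm (taylor_coeff (\<lambda>z. z^n) k) powr p * (real k + 1) powr (p - 2)
                     * moment \<omega> (real k * p + 1)))
      = (\<Sum>k\<in>{n}. ennreal (norm (taylor_coeff (\<lambda>z. z^n) k) powr p * (real k + 1) powr (p - 2)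
                     * moment \<omega> (real k * p + 1)))"
    by (rule suminf_finite) (auto simp: tc_power)
  also have "\<dots> = ennreal ((real n + 1) powr (p - 2) * moment \<omega> x)"
    by (simp add: tc_power x_def)
  finally show ?thesis unfolding HL_norm_def ennroot_def x_def[symmetric] using m0 by simp
qed

end


lemma powr_ineq:
  fixes u v c p :: real
  assumes "0 \<le> u" "0 \<le> v" "0 < c" "0 < p" "u powr (1/p) \<le> c * v powr (1/p)"
  shows "u \<le> c powr p * v"
proof (rule ccontr)
  assume "\<not> u \<le> c powr p * v"
  then have "c powr p * v < u" by simp
  then have "(c powr p * v) powr (1/p) < u powr (1/p)"
    using assms by (intro powr_less_mono2) auto
  also note assms(5)
  also have "c * v powr (1/p) = (c powr p * v) powr (1/p)"
    using assms by (simp add: powr_mult powr_powr)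
  finally show False by simp
qed

theorem mainTheorem11:
  fixes \<omega> :: "real \<Rightarrow> real" and p :: real
  assumes "radial_weight \<omega>" and "0 < p" and "p \<noteq> 2"
  shows "\<not> (\<exists>C::real. C > 1 \<and>
            (\<forall>f. f holomorphic_on ball 0 1 \<longrightarrow>
                 ennreal (1 / C) * HL_norm \<omega> p f \<le> A_norm \<omega> p f \<and>
                 A_norm \<omega> p f \<le> ennreal C * HL_norm \<omega> p f))"
proof
  assume "\<exists>C::real. C > 1 \<and>
            (\<forall>f. f holomorphic_on ball 0 1 \<longrightarrow>
                 ennreal (1 / C) * HL_norm \<omega> p f \<le> A_norm \<omega> p f \<and>
                 A_norm \<omega> p f \<le> ennreal C * HL_norm \<omega> p f)"
  then obtain C where C: "C > 1" and H: "\<And>f. f holomorphic_on ball 0 1 \<Longrightarrow>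
                 ennreal (1 / C) * HL_norm \<omega> p f \<le> A_norm \<omega> p f \<and>
                 A_norm \<omega> p f \<le> ennreal C * HL_norm \<omega> p f" by blast
  have rw: "radial_weight \<omega>" and p: "0 < p" using assms by auto
  define K where "K = 2 * C powr p"
  have K0: "K > 0" unfolding K_def using C by simp
  define q where "q = \<bar>p - 2\<bar>"
  have q0: "q > 0" unfolding q_def using assms by simp
  obtain n :: nat where n: "K powr (1/q) < real n" using reals_Archimedean2 by blast
  define b where "b = (real n + 1) powr (p - 2)"
  define a where "a = moment \<omega> (real n * p + 1)"
  have a0: "a > 0" unfolding a_def using moment_pos[OF rw] p by simp
  have b0: "b > 0" unfolding b_def by simp
  have big: "(real n + 1) powr q > K"
  proof -
    have "K = (K powr (1/q)) powr q" using K0 q0 by (simp add: powr_powr)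
    also have "\<dots> < (real n + 1) powr q"
      using n q0 by (intro powr_less_mono2) auto
    finally show ?thesis .
  qed
  have hol: "(\<lambda>z. z^n) holomorphic_on ball 0 1" by (intro holomorphic_intros)
  note HH = H[OF hol, unfolded A_mono[OF rw p] HL_mono[OF rw p], folded a_def b_def]
  show False
  proof (cases "p < 2")
    case True
    have "ennreal ((2 * a) powr (1/p)) \<le> ennreal (C * (b * a) powr (1/p))"
      using HH C by (simp add: ennreal_mult[symmetric])
    then have "(2 * a) powr (1/p) \<le> C * (b * a) powr (1/p)"
      using C by (subst (asm) ennreal_le_iff) auto
    then have "2 * a \<le> C powr p * (b * a)"
      using a0 b0 C p by (intro powr_ineq) auto
    then have "2 \<le> C powr p * b" using a0 by (simp add: mult.assoc[symmetric])
    moreover have "b * (real n + 1) powr q = 1"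
      unfolding b_def q_def using True by (simp add: powr_add[symmetric])
    ultimately have "2 * (real n + 1) powr q \<le> C powr p"
      by (metis mult.assoc mult.right_neutral mult_right_mono powr_ge_zero)
    then show False using big unfolding K_def
      by (smt (verit) powr_ge_zero)
  next
    case False
    with assms have pg: "p > 2" by simp
    have "ennreal ((1/C) * (b * a) powr (1/p)) \<le> ennreal ((2 * a) powr (1/p))"
      using HH C by (simp add: ennreal_mult[symmetric])
    then have "(1/C) * (b * a) powr (1/p) \<le> (2 * a) powr (1/p)"
      using C by (subst (asm) ennreal_le_iff) auto
    then have "(b * a) powr (1/p) \<le> C * (2 * a) powr (1/p)"
      using C by (simp add: field_simps)
    then have "b * a \<le> C powr p * (2 * a)"
      using a0 b0 C p by (intro powr_ineq) auto
    then have "b \<le> 2 * C powr p" using a0 by (simp add: mult.assoc[symmetric])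
    moreover have "b = (real n + 1) powr q"
      unfolding b_def q_def using pg by simp
    ultimately show False using big unfolding K_def by simp
  qed
qed


end
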